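(* Let $X$ be a path-connected topological space admitting a universal cover, let $\mathfrak a\in H^1(X;\mathbb R)$ be represented by a singular one-cocycle $\alpha$, and let $G\subseteq\mathrm{Homeo}(X,\mathfrak a)$ be a subgroup on which the cocycles $\mathfrak G_{x,\alpha}$ and $\mathfrak G_{y,\alpha}$ are bounded, for some $x,y\in X$. Then the map $\mathfrak q\colon G\to\mathbb R$ defined by $$\mathfrak q(g):=\mathfrak K_\alpha(g)(y)-\mathfrak K_\alpha(g)(x)$$ is a quasimorphism on $G$, and $D(\mathfrak q)\le\|\mathfrak G_{x,\alpha}-\mathfrak G_{y,\alpha}\|\le\|\mathfrak G_{x,\alpha}\|+\|\mathfrak G_{y,\alpha}\|$, where $\|\cdot\|$ is the supremum norm on $G\times G$.
   Context: $\mathrm{Homeo}(X,\mathfrak a)$ is the group of homeomorphisms $g$ with $g^*\mathfrak a=\mathfrak a$. $\mathfrak G_{z,\alpha}(g,h)=\int_\gamma g^*\alpha-\alpha$ for $\gamma$ any path from $z$ to $hz$, where $\int_\gamma\sigma$ is the pairing of chain and cochain. For $g\in\mathrm{Homeo}(X,\mathfrak a)$, $\mathfrak K_\alpha(g)$ is a function $F\colon X\to\mathbb R$, defined up to additive constant, with $g^*\alpha-\alpha=\delta F$; so differences $\mathfrak K_\alpha(g)(y)-\mathfrak K_\alpha(g)(x)$ are well defined. The defect of $\mathfrak q\colon G\to\mathbb R$ is $D(\mathfrak q)=\sup_{g,h\in G}|\mathfrak q(g)-\mathfrak q(gh)+\mathfrak q(h)|$, and $\mathfrak q$ is a quasimorphism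 if $D(\mathfrak q)<\infty$. *)

theory Defs
  imports "HOL-Analysis.Analysis" "HOL-Homology.Homology" "HOL-Algebra.Bij"
begin

definition covering_map_top :: "'c topology \<Rightarrow> 'a topology \<Rightarrow> ('c \<Rightarrow> 'a) \<Rightarrow> bool" where
  "covering_map_top C X p \<equiv>
     continuous_map C X p \<and> p ` topspace C = topspace X \<and>
     (\<forall>x \<in> topspace X. \<exists>T. x \<in> T \<and> openin X T \<and>
        (\<exists>v. \<Union>v = topspace C \<inter> p -` T \<and> (\<forall>u \<in> v. openin C u) \<and> pairwise disjnt v \<and>
             (\<forall>u \<in> v. \<exists>q. homeomorphic_maps (subtopology C u) (subtopology X T) p q)))"

definition simply_connected_space :: "'c topology \<Rightarrow> bool" where
  "simply_connected_space C \<equiv> path_connected_space C \<and>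
     (\<forall>l. pathin C l \<and> l 1 = l 0 \<longrightarrow>
        homotopic_with (\<lambda>r. r 1 = r 0) (subtopology euclideanreal {0..1}) C l (\<lambda>_. l 0))"

definition has_universal_cover :: "'c itself \<Rightarrow> 'a topology \<Rightarrow> bool" where
  "has_universal_cover _ X \<equiv> \<exists>(C :: 'c topology) p. covering_map_top C X p \<and> simply_connected_space C"

type_synonym 'a cochain = "((nat \<Rightarrow> real) \<Rightarrow> 'a) \<Rightarrow> real"

definition pairing :: "'a cochain \<Rightarrow> 'a chain \<Rightarrow> real" where
  "pairing \<alpha> c = (\<Sum>\<sigma> \<in> Poly_Mapping.keys c. real_of_int (poly_mapping.lookup c \<sigma>) * \<alpha> \<sigma>)"

text \<open>A 0-cochain given by a function on points: evaluate a singular 0-simplex at the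
  unique point of the standard 0-simplex.\<close>
definition point_cochain :: "('a \<Rightarrow> real) \<Rightarrow> 'a cochain" where
  "point_cochain F = (\<lambda>\<tau>. F (\<tau> (\<lambda>i. if i = 0 then 1 else 0)))"

definition coboundary0 :: "('a \<Rightarrow> real) \<Rightarrow> 'a cochain" where
  "coboundary0 F = (\<lambda>\<sigma>. pairing (point_cochain F) (chain_boundary 1 (frag_of \<sigma>)))"

definition cocycle1 :: "'a topology \<Rightarrow> 'a cochain \<Rightarrow> bool" where
  "cocycle1 X \<alpha> \<longleftrightarrow> (\<forall>\<sigma>. singular_simplex 2 X \<sigma> \<longrightarrow> pairing \<alpha> (chain_boundary 2 (frag_of \<sigma>)) = 0)"

definition pullback1 :: "('a \<Rightarrow> 'a) \<Rightarrow> 'a cochain \<Rightarrow> 'a cochain" where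
  "pullback1 g \<alpha> = (\<lambda>\<sigma>. \<alpha> (simplex_map 1 g \<sigma>))"

definition is_K :: "'a topology \<Rightarrow> 'a cochain \<Rightarrow> ('a \<Rightarrow> 'a) \<Rightarrow> ('a \<Rightarrow> real) \<Rightarrow> bool" where
  "is_K X \<alpha> g F \<longleftrightarrow> (\<forall>\<sigma>. singular_simplex 1 X \<sigma> \<longrightarrow> pullback1 g \<alpha> \<sigma> - \<alpha> \<sigma> = coboundary0 F \<sigma>)"

text \<open>\<open>Homeo(X, [\<alpha>])\<close>: homeomorphisms of X preserving the cohomology class of \<alpha>.\<close>
definition Homeo_class :: "'a topology \<Rightarrow> 'a cochain \<Rightarrow> ('a \<Rightarrow> 'a) set" where
  "Homeo_class X \<alpha> = {g. homeomorphic_map X X g \<and> (\<exists>F. is_K X \<alpha> g F)}"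

text \<open>\<open>\<KK>\<^sub>\<alpha>(g)\<close>, a chosen primitive (defined up to an additive constant).\<close>
definition K_fun :: "'a topology \<Rightarrow> 'a cochain \<Rightarrow> ('a \<Rightarrow> 'a) \<Rightarrow> 'a \<Rightarrow> real" where
  "K_fun X \<alpha> g = (SOME F. is_K X \<alpha> g F)"

text \<open>Singular 1-simplex viewed as a path: it starts at the vertex e0 and ends at e1.\<close>
definition simplex_from_to :: "'a topology \<Rightarrow> 'a \<Rightarrow> 'a \<Rightarrow> ((nat \<Rightarrow> real) \<Rightarrow> 'a) \<Rightarrow> bool" where
  "simplex_from_to X a b \<sigma> \<longleftrightarrow> singular_simplex 1 X \<sigma> \<and>
     \<sigma> (\<lambda>i. if i = 0 then 1 else 0) = a \<and> \<sigma> (\<lambda>i. if i = 1 then 1 else 0) = b"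

text \<open>\<open>\<GG>\<^sub>z\<^sub>,\<^sub>\<alpha>(g,h) = \<integral>\<^sub>\<gamma> g\<^sup>*\<alpha> - \<alpha>\<close> for a (chosen) path \<gamma> from z to h z.\<close>
definition G_cocycle :: "'a topology \<Rightarrow> 'a \<Rightarrow> 'a cochain \<Rightarrow> ('a \<Rightarrow> 'a) \<Rightarrow> ('a \<Rightarrow> 'a) \<Rightarrow> real" where
  "G_cocycle X z \<alpha> g h =
     (let \<gamma> = (SOME \<gamma>. simplex_from_to X z (h z) \<gamma>)
      in pairing (\<lambda>\<sigma>. pullback1 g \<alpha> \<sigma> - \<alpha> \<sigma>) (frag_of \<gamma>))"

definition sup_norm :: "('g set) \<Rightarrow> ('g \<Rightarrow> 'g \<Rightarrow> real) \<Rightarrow> real" where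
  "sup_norm G f = (SUP p \<in> G \<times> G. \<bar>f (fst p) (snd p)\<bar>)"

definition bounded_on :: "('g set) \<Rightarrow> ('g \<Rightarrow> 'g \<Rightarrow> real) \<Rightarrow> bool" where
  "bounded_on G f \<longleftrightarrow> bdd_above ((\<lambda>p. \<bar>f (fst p) (snd p)\<bar>) ` (G \<times> G))"

definition defect :: "('g, 'b) monoid_scheme \<Rightarrow> ('g \<Rightarrow> real) \<Rightarrow> real" where
  "defect G q = (SUP p \<in> carrier G \<times> carrier G.
       \<bar>q (fst p) - q (fst p \<otimes>\<^bsub>G\<^esub> snd p) + q (snd p)\<bar>)"

definition quasimorphism :: "('g, 'b) monoid_scheme \<Rightarrow> ('g \<Rightarrow> real) \<Rightarrow> bool" where
  "quasimorphism G q \<longleftrightarrow> bdd_above ((\<lambda>p. \<bar>q (fst p) - q (fst p \<otimes>\<^bsub>G\<^esub> snd p) + q (snd p)\<bar>)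
                               ` (carrier G \<times> carrier G))"

end

theory Submission imports Defs begin

lemma pairing_superset:
  assumes "finite S" "Poly_Mapping.keys c \<subseteq> S"
  shows "pairing \<alpha> c = (\<Sum>\<sigma>\<in>S. real_of_int (poly_mapping.lookup c \<sigma>) * \<alpha> \<sigma>)"
  unfolding pairing_def
  by (rule sum.mono_neutral_left) (use assms in \<open>auto simp: in_keys_iff\<close>)

lemma pairing_of: "pairing \<alpha> (frag_of a) = \<alpha> a"
  by (simp add: pairing_def)

lemma pairing_diff: "pairing \<alpha> (frag_of a - frag_of b) = \<alpha> a - \<alpha> b"
proof -
  have "Poly_Mapping.keys (frag_of a - frag_of b) \<subseteq> {a,b}"
    by (auto simp: in_keys_iff lookup_minus lookup_single split: if_splits)
  then have "pairing \<alpha> (frag_of a - frag_of b) = (\<Sum>\<sigma>\<in>{a,b}. real_of_int (poly_mapping.lookup (frag_of a - frag_of b) \<sigma>) * \<alpha> \<sigma>)"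
    by (intro pairing_superset) auto
  also have "\<dots> = \<alpha> a - \<alpha> b"
    by (cases "a = b") (auto simp: lookup_minus lookup_single)
  finally show ?thesis .
qed

lemma coboundary0_eq:
  "coboundary0 F \<sigma> = F (\<sigma> (\<lambda>i. if i = 1 then 1 else 0)) - F (\<sigma> (\<lambda>i. if i = 0 then 1 else 0))"
proof -
  have b: "chain_boundary 1 (frag_of \<sigma>) = frag_of (singular_face 1 0 \<sigma>) - frag_of (singular_face 1 1 \<sigma>)"
    by (simp add: chain_boundary_def frag_cmul_minus_one)
  have v: "(\<lambda>i::nat. if i = 0 then 1 else (0::real)) \<in> standard_simplex 0" by simp
  have f0: "simplical_face 0 (\<lambda>i::nat. if i = 0 then 1 else (0::real)) = (\<lambda>i. if i = 1 then 1 else 0)"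
    by (auto simp: simplical_face_def)
  have f1: "simplical_face (Suc 0) (\<lambda>i::nat. if i = 0 then 1 else (0::real)) = (\<lambda>i. if i = 0 then 1 else 0)"
    by (auto simp: simplical_face_def)
  show ?thesis
    unfolding coboundary0_def b pairing_diff point_cochain_def singular_face_def
    using v by (simp add: f0 f1)
qed

lemma path_simplex:
  assumes "path_connected_space X" "a \<in> topspace X" "b \<in> topspace X"
  shows "\<exists>\<sigma>. simplex_from_to X a b \<sigma>"
proof -
  obtain g where g: "pathin X g" "g 0 = a" "g 1 = b"
    using assms unfolding path_connected_space_def by blast
  define \<sigma> where "\<sigma> = restrict (\<lambda>v. g (v 1)) (standard_simplex 1)"
  have c1: "continuous_map (subtopology (powertop_real UNIV) (standard_simplex 1))
             (subtopology euclideanreal {0..1}) (\<lambda>v. v 1)"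
    by (auto simp: continuous_map_in_subtopology standard_simplex_def
        intro!: continuous_map_from_subtopology continuous_map_product_projection)
  have "continuous_map (subtopology (powertop_real UNIV) (standard_simplex 1)) X (\<lambda>v. g (v 1))"
    using continuous_map_compose[OF c1 g(1)[unfolded pathin_def]] by (simp add: o_def)
  then have "continuous_map (subtopology (powertop_real UNIV) (standard_simplex 1)) X \<sigma>"
    unfolding \<sigma>_def by (rule continuous_map_eq) auto
  then have "singular_simplex 1 X \<sigma>"
    by (simp add: singular_simplex_def \<sigma>_def)
  moreover have "\<sigma> (\<lambda>i. if i = 0 then 1 else 0) = a" "\<sigma> (\<lambda>i. if i = 1 then 1 else 0) = b"
    using g by (auto simp: \<sigma>_def)
  ultimately show ?thesis unfolding simplex_from_to_def by blast
qed

lemma K_valid: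
  assumes "g \<in> Homeo_class X \<alpha>" shows "is_K X \<alpha> g (K_fun X \<alpha> g)"
proof -
  obtain F where "is_K X \<alpha> g F" using assms by (auto simp: Homeo_class_def)
  then show ?thesis unfolding K_fun_def by (rule someI[of "is_K X \<alpha> g"])
qed

lemma K_diff:
  assumes "simplex_from_to X a b \<sigma>" "is_K X \<alpha> g F"
  shows "pullback1 g \<alpha> \<sigma> - \<alpha> \<sigma> = F b - F a"
  using assms unfolding simplex_from_to_def is_K_def by (simp add: coboundary0_eq)

lemma G_eq:
  assumes "path_connected_space X" "z \<in> topspace X" "h z \<in> topspace X" "g \<in> Homeo_class X \<alpha>"
  shows "G_cocycle X z \<alpha> g h = K_fun X \<alpha> g (h z) - K_fun X \<alpha> g z"
proof -
  let ?\<gamma> = "SOME \<gamma>. simplex_from_to X z (h z) \<gamma>"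
  have gam: "simplex_from_to X z (h z) ?\<gamma>"
    using path_simplex[OF assms(1-3)] by (rule someI_ex)
  show ?thesis
    unfolding G_cocycle_def Let_def pairing_of using K_diff[OF gam K_valid[OF assms(4)]] by simp
qed

lemma K_comp:
  assumes "path_connected_space X" "a \<in> topspace X" "b \<in> topspace X"
    and g: "g \<in> Homeo_class X \<alpha>" and h: "h \<in> Homeo_class X \<alpha>"
    and gh: "compose (topspace X) g h \<in> Homeo_class X \<alpha>"
  shows "K_fun X \<alpha> (compose (topspace X) g h) b - K_fun X \<alpha> (compose (topspace X) g h) a
    = (K_fun X \<alpha> g (h b) - K_fun X \<alpha> g (h a)) + (K_fun X \<alpha> h b - K_fun X \<alpha> h a)"
proof -
  obtain \<sigma> where \<sigma>: "simplex_from_to X a b \<sigma>" using path_simplex[OF assms(1-3)] by blast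
  have ss: "singular_simplex 1 X \<sigma>" using \<sigma> by (simp add: simplex_from_to_def)
  have hc: "continuous_map X X h" using h homeomorphic_imp_continuous_map unfolding Homeo_class_def by blast
  define \<tau> where "\<tau> = simplex_map 1 h \<sigma>"
  have \<tau>: "simplex_from_to X (h a) (h b) \<tau>"
    using \<sigma> singular_simplex_simplex_map[OF ss hc]
    unfolding simplex_from_to_def \<tau>_def by (simp add: simplex_map_def)
  have eq: "simplex_map 1 (compose (topspace X) g h) \<sigma> = simplex_map 1 g \<tau>"
  proof
    fix v show "simplex_map 1 (compose (topspace X) g h) \<sigma> v = simplex_map 1 g \<tau> v"
    proof (cases "v \<in> standard_simplex 1")
      case True
      then have "\<sigma> v \<in> topspace X"
        using ss continuous_map_image_subset_topspace unfolding singular_simplex_def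
        by (metis image_subset_iff topspace_standard_simplex)
      then show ?thesis using True by (simp add: simplex_map_def \<tau>_def compose_def)
    next
      case False
      then show ?thesis by (simp add: simplex_map_def)
    qed
  qed
  have "K_fun X \<alpha> (compose (topspace X) g h) b - K_fun X \<alpha> (compose (topspace X) g h) a
      = pullback1 (compose (topspace X) g h) \<alpha> \<sigma> - \<alpha> \<sigma>"
    using K_diff[OF \<sigma> K_valid[OF gh]] by simp
  also have "\<dots> = (pullback1 g \<alpha> \<tau> - \<alpha> \<tau>) + (pullback1 h \<alpha> \<sigma> - \<alpha> \<sigma>)"
    unfolding pullback1_def eq unfolding \<tau>_def by simp
  also have "\<dots> = (K_fun X \<alpha> g (h b) - K_fun X \<alpha> g (h a)) + (K_fun X \<alpha> h b - K_fun X \<alpha> h a)"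
    using K_diff[OF \<tau> K_valid[OF g]] K_diff[OF \<sigma> K_valid[OF h]] by simp
  finally show ?thesis .
qed

theorem proposition3p1:
  fixes X :: "'a topology" and \<alpha> :: "'a cochain" and H :: "('a \<Rightarrow> 'a) set"
    and x y :: 'a
  assumes "path_connected_space X"
    and "has_universal_cover TYPE('c) X"
    and "cocycle1 X \<alpha>"
    and "subgroup H (BijGroup (topspace X))"
    and "H \<subseteq> Homeo_class X \<alpha>"
    and "x \<in> topspace X" and "y \<in> topspace X"
    and "bounded_on H (G_cocycle X x \<alpha>)"
    and "bounded_on H (G_cocycle X y \<alpha>)"
  shows "quasimorphism ((BijGroup (topspace X))\<lparr>carrier := H\<rparr>) (\<lambda>g. K_fun X \<alpha> g y - K_fun X \<alpha> g x)
       \<and> defect ((BijGroup (topspace X))\<lparr>carrier := H\<rparr>) (\<lambda>g. K_fun X \<alpha> g y - K_fun X \<alpha> g x)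
           \<le> sup_norm H (\<lambda>g h. G_cocycle X x \<alpha> g h - G_cocycle X y \<alpha> g h)
       \<and> sup_norm H (\<lambda>g h. G_cocycle X x \<alpha> g h - G_cocycle X y \<alpha> g h)
           \<le> sup_norm H (G_cocycle X x \<alpha>) + sup_norm H (G_cocycle X y \<alpha>)"
proof -
  let ?S = "topspace X"
  let ?G = "(BijGroup ?S)\<lparr>carrier := H\<rparr>"
  let ?q = "\<lambda>g. K_fun X \<alpha> g y - K_fun X \<alpha> g x"
  let ?Gx = "G_cocycle X x \<alpha>" and ?Gy = "G_cocycle X y \<alpha>"
  have HB: "H \<subseteq> Bij ?S" using subgroup.subset[OF assms(4)] by (simp add: BijGroup_def)
  have Hne: "H \<noteq> {}" using subgroup.one_closed[OF assms(4)] by blast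
  have mapS: "h z \<in> ?S" if "h \<in> H" "z \<in> ?S" for h z
    using HB that by (auto simp: Bij_def bij_betw_def)
  have mult: "g \<otimes>\<^bsub>BijGroup ?S\<^esub> h = compose ?S g h" if "g \<in> H" "h \<in> H" for g h
    using HB that by (simp add: BijGroup_def subsetD)
  have key: "?q g - ?q (g \<otimes>\<^bsub>BijGroup ?S\<^esub> h) + ?q h = ?Gx g h - ?Gy g h"
    if g: "g \<in> H" and h: "h \<in> H" for g h
  proof -
    have gh: "compose ?S g h \<in> H"
      using subgroup.m_closed[OF assms(4) g h] mult[OF g h] by simp
    have gK: "g \<in> Homeo_class X \<alpha>" "h \<in> Homeo_class X \<alpha>" "compose ?S g h \<in> Homeo_class X \<alpha>"
      using assms(5) g h gh by auto
    have c: "K_fun X \<alpha> (compose ?S g h) y - K_fun X \<alpha> (compose ?S g h) x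
      = (K_fun X \<alpha> g (h y) - K_fun X \<alpha> g (h x)) + (K_fun X \<alpha> h y - K_fun X \<alpha> h x)"
      using K_comp[OF assms(1) assms(6) assms(7) gK] .
    have "?Gx g h = K_fun X \<alpha> g (h x) - K_fun X \<alpha> g x"
      using G_eq[where h=h and z=x, OF assms(1) assms(6) mapS[OF h assms(6)] gK(1)] .
    moreover have "?Gy g h = K_fun X \<alpha> g (h y) - K_fun X \<alpha> g y"
      using G_eq[where h=h and z=y, OF assms(1) assms(7) mapS[OF h assms(7)] gK(1)] .
    ultimately show ?thesis using c mult[OF g h] by simp
  qed
  have bdx: "bdd_above ((\<lambda>p. \<bar>?Gx (fst p) (snd p)\<bar>) ` (H \<times> H))"
    using assms(8) by (simp add: bounded_on_def)
  have bdy: "bdd_above ((\<lambda>p. \<bar>?Gy (fst p) (snd p)\<bar>) ` (H \<times> H))"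
    using assms(9) by (simp add: bounded_on_def)
  have img: "(\<lambda>p. \<bar>?q (fst p) - ?q (fst p \<otimes>\<^bsub>?G\<^esub> snd p) + ?q (snd p)\<bar>) ` (carrier ?G \<times> carrier ?G)
      = (\<lambda>p. \<bar>?Gx (fst p) (snd p) - ?Gy (fst p) (snd p)\<bar>) ` (H \<times> H)"
  proof (rule image_cong)
    fix p assume "p \<in> H \<times> H"
    then obtain g h where p: "p = (g,h)" and g: "g \<in> H" and h: "h \<in> H" by auto
    have mG: "g \<otimes>\<^bsub>?G\<^esub> h = g \<otimes>\<^bsub>BijGroup ?S\<^esub> h" by simp
    show "\<bar>?q (fst p) - ?q (fst p \<otimes>\<^bsub>?G\<^esub> snd p) + ?q (snd p)\<bar> = \<bar>?Gx (fst p) (snd p) - ?Gy (fst p) (snd p)\<bar>"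
      unfolding p fst_conv snd_conv mG key[OF g h] ..
  qed simp
  have Bx: "\<bar>?Gx g h\<bar> \<le> (SUP p \<in> H \<times> H. \<bar>?Gx (fst p) (snd p)\<bar>)" if "g \<in> H" "h \<in> H" for g h using cSUP_upper[OF _ bdx, of "(g,h)"] that by simp
  have By: "\<bar>?Gy g h\<bar> \<le> (SUP p \<in> H \<times> H. \<bar>?Gy (fst p) (snd p)\<bar>)" if "g \<in> H" "h \<in> H" for g h using cSUP_upper[OF _ bdy, of "(g,h)"] that by simp
  have bd: "bdd_above ((\<lambda>p. \<bar>?Gx (fst p) (snd p) - ?Gy (fst p) (snd p)\<bar>) ` (H \<times> H))"
    unfolding bdd_above_def
  proof (intro exI ballI)
    fix r assume "r \<in> (\<lambda>p. \<bar>?Gx (fst p) (snd p) - ?Gy (fst p) (snd p)\<bar>) ` (H \<times> H)"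
    then obtain g h where "g \<in> H" "h \<in> H" "r = \<bar>?Gx g h - ?Gy g h\<bar>" by auto
    then show "r \<le> (SUP p \<in> H \<times> H. \<bar>?Gx (fst p) (snd p)\<bar>) + (SUP p \<in> H \<times> H. \<bar>?Gy (fst p) (snd p)\<bar>)" using Bx[of g h] By[of g h] by linarith
  qed
  have q: "quasimorphism ?G ?q"
    unfolding quasimorphism_def img by (rule bd)
  have d: "defect ?G ?q = sup_norm H (\<lambda>g h. ?Gx g h - ?Gy g h)"
    unfolding defect_def sup_norm_def img by simp
  have s: "sup_norm H (\<lambda>g h. ?Gx g h - ?Gy g h) \<le> sup_norm H ?Gx + sup_norm H ?Gy"
    unfolding sup_norm_def
  proof (rule cSUP_least)
    show "H \<times> H \<noteq> {}" using Hne by simp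
    fix p assume p: "p \<in> H \<times> H"
    have "\<bar>?Gx (fst p) (snd p)\<bar> \<le> (SUP p \<in> H \<times> H. \<bar>?Gx (fst p) (snd p)\<bar>)"
      by (rule cSUP_upper[OF p bdx])
    moreover have "\<bar>?Gy (fst p) (snd p)\<bar> \<le> (SUP p \<in> H \<times> H. \<bar>?Gy (fst p) (snd p)\<bar>)"
      by (rule cSUP_upper[OF p bdy])
    ultimately show "\<bar>?Gx (fst p) (snd p) - ?Gy (fst p) (snd p)\<bar>
       \<le> (SUP p \<in> H \<times> H. \<bar>?Gx (fst p) (snd p)\<bar>) + (SUP p \<in> H \<times> H. \<bar>?Gy (fst p) (snd p)\<bar>)"
      by linarith
  qed
  show ?thesis using q d s by simp
qed

end
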